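(* Let $V\subset\mathbb{R}^d$ be a finite antichain, $p\in S_V$, and $v\in D_p$ with $p_i=v_i$. Then $v$ is an $i$-witness for $p$ if and only if there is no minimum $w\in V$ such that $w_i<v_i=p_i$ and, for every $j\neq i$, either $w_j\le v_j$ or $w_j<p_j$.
   Context: For $x,y\in\mathbb{R}^d$, $x\le y$ (dominance order) means $x_i\le y_i$ for all $i$; $y\rhd x$ means $y_i>x_i$ for all $i$; $y\rhd_i x$ means $y_i=x_i$ and $y_j>x_j$ for all $j\neq i$. $V\subset\mathbb{R}^d$ is a finite antichain in the dominance order (elements are called minima). The orthogonal surface $S_V$ is the topological boundary of $\langle V\rangle=\{x: x\ge v\text{ for some }v\in V\}$; equivalently $p\in S_V$ iff there is $v\in V$ with $v\le p$ and no $w\in V$ with $p\rhd w$. For $p\in S_V$, $D_p=\{v\in V:v\le p\}$. For $p\in S_V$, a minimum $v\in D_p$ is an $i$-witness for $p$ if there is $q\in S_V$ with $v\le p\le q$ and $q\rhd_i v$. *)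

theory Defs
  imports "HOL-Analysis.Analysis"
begin

definition dom_le :: "real^'d \<Rightarrow> real^'d \<Rightarrow> bool" where
  "dom_le x y \<longleftrightarrow> (\<forall>i. x $ i \<le> y $ i)"

definition dom_gt :: "real^'d \<Rightarrow> real^'d \<Rightarrow> bool" where
  "dom_gt y x \<longleftrightarrow> (\<forall>i. y $ i > x $ i)"

definition dom_gt_i :: "real^'d \<Rightarrow> 'd \<Rightarrow> real^'d \<Rightarrow> bool" where
  "dom_gt_i y i x \<longleftrightarrow> y $ i = x $ i \<and> (\<forall>j. j \<noteq> i \<longrightarrow> y $ j > x $ j)"

definition finite_antichain :: "(real^'d) set \<Rightarrow> bool" where
  "finite_antichain V \<longleftrightarrow> finite V \<and> (\<forall>v\<in>V. \<forall>w\<in>V. dom_le v w \<longrightarrow> v = w)"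

definition orth_surface :: "(real^'d) set \<Rightarrow> (real^'d) set" where
  "orth_surface V = {p. (\<exists>v\<in>V. dom_le v p) \<and> \<not> (\<exists>w\<in>V. dom_gt p w)}"

definition D_set :: "(real^'d) set \<Rightarrow> real^'d \<Rightarrow> (real^'d) set" where
  "D_set V p = {v\<in>V. dom_le v p}"

definition is_witness :: "(real^'d) set \<Rightarrow> 'd \<Rightarrow> real^'d \<Rightarrow> real^'d \<Rightarrow> bool" where
  "is_witness V i p v \<longleftrightarrow> v \<in> D_set V p \<and>
     (\<exists>q\<in>orth_surface V. dom_le v p \<and> dom_le p q \<and> dom_gt_i q i v)"

end

theory Submission
  imports Defs
begin

theorem corollary4p4:
  fixes V :: "(real^'d) set" and p v :: "real^'d" and i :: 'd
  assumes "finite_antichain V"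
    and "p \<in> orth_surface V"
    and "v \<in> D_set V p"
    and "p $ i = v $ i"
  shows "is_witness V i p v \<longleftrightarrow>
    \<not> (\<exists>w\<in>V. w $ i < v $ i \<and> (\<forall>j. j \<noteq> i \<longrightarrow> w $ j \<le> v $ j \<or> w $ j < p $ j))"
proof
  assume "is_witness V i p v"
  then obtain q where q: "q \<in> orth_surface V" "dom_le p q" "dom_gt_i q i v"
    unfolding is_witness_def by blast
  show "\<not> (\<exists>w\<in>V. w $ i < v $ i \<and> (\<forall>j. j \<noteq> i \<longrightarrow> w $ j \<le> v $ j \<or> w $ j < p $ j))"
  proof
    assume "\<exists>w\<in>V. w $ i < v $ i \<and> (\<forall>j. j \<noteq> i \<longrightarrow> w $ j \<le> v $ j \<or> w $ j < p $ j)"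
    then obtain w where w: "w \<in> V" "w $ i < v $ i" "\<forall>j. j \<noteq> i \<longrightarrow> w $ j \<le> v $ j \<or> w $ j < p $ j"
      by blast
    have "dom_gt q w"
      unfolding dom_gt_def
    proof
      fix j
      show "q $ j > w $ j"
      proof (cases "j = i")
        case True then show ?thesis using w q(3) by (simp add: dom_gt_i_def)
      next
        case False
        then have "q $ j > v $ j" using q(3) by (simp add: dom_gt_i_def)
        moreover have "p $ j \<le> q $ j" using q(2) by (simp add: dom_le_def)
        ultimately show ?thesis using w(3) False by fastforce
      qed
    qed
    then show False using q(1) w(1) unfolding orth_surface_def by blast
  qed
next
  assume H: "\<not> (\<exists>w\<in>V. w $ i < v $ i \<and> (\<forall>j. j \<noteq> i \<longrightarrow> w $ j \<le> v $ j \<or> w $ j < p $ j))"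
  have fV: "finite V" using assms(1) by (simp add: finite_antichain_def)
  have vp: "dom_le v p" "v \<in> V" using assms(3) by (auto simp: D_set_def)
  define E where "E = (\<lambda>(w, j). w $ j - v $ j) ` {(w, j). w \<in> V \<and> w $ j > v $ j}"
  have fE: "finite E" unfolding E_def
    by (rule finite_imageI, rule finite_subset[of _ "V \<times> UNIV"]) (auto simp: fV)
  define e where "e = (if E = {} then 1 else Min E)"
  have Epos: "\<forall>x\<in>E. x > 0" unfolding E_def by auto
  have epos: "e > 0" unfolding e_def using fE Epos by auto
  have ele: "\<And>w j. w \<in> V \<Longrightarrow> w $ j > v $ j \<Longrightarrow> e \<le> w $ j - v $ j"
  proof -
    fix w j assume "w \<in> V" "w $ j > v $ j"
    then have "w $ j - v $ j \<in> E" unfolding E_def by force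
    then show "e \<le> w $ j - v $ j" unfolding e_def using fE by auto
  qed
  define q :: "real^'d" where
    "q = (\<chi> j. if j = i then p $ i else if p $ j > v $ j then p $ j else v $ j + e)"
  have pq: "dom_le p q" unfolding dom_le_def q_def
    using vp(1) epos by (auto simp: dom_le_def)
  have gq: "dom_gt_i q i v" unfolding dom_gt_i_def q_def using assms(4) epos by auto
  have vq: "dom_le v q" using vp(1) pq unfolding dom_le_def by (meson order_trans)
  have "\<not> (\<exists>w\<in>V. dom_gt q w)"
  proof
    assume "\<exists>w\<in>V. dom_gt q w"
    then obtain w where w: "w \<in> V" "dom_gt q w" by blast
    have "q $ i = v $ i" using assms(4) by (simp add: q_def)
    then have "w $ i < v $ i" using w(2) unfolding dom_gt_def by metis
    moreover have "\<forall>j. j \<noteq> i \<longrightarrow> w $ j \<le> v $ j \<or> w $ j < p $ j"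
    proof (intro allI impI)
      fix j assume ji: "j \<noteq> i"
      have lt: "w $ j < q $ j" using w(2) unfolding dom_gt_def by blast
      show "w $ j \<le> v $ j \<or> w $ j < p $ j"
      proof (cases "p $ j > v $ j")
        case True then show ?thesis using lt ji by (simp add: q_def)
      next
        case False
        then have "w $ j < v $ j + e" using lt ji by (simp add: q_def)
        then show ?thesis using ele[OF w(1), of j] by linarith
      qed
    qed
    ultimately show False using H w(1) by blast
  qed
  then have "q \<in> orth_surface V" using vq vp(2) unfolding orth_surface_def by blast
  then show "is_witness V i p v" unfolding is_witness_def using assms(3) vp(1) pq gq by blast
qed

end
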